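(* Let $f\in C^{1,1}_L(\mathbb{R}^n)$, let $\mathcal{Y}=\{y_1,\dots,y_{n+1}\}\subset\mathbb{R}^n$ be affinely independent, let $m$ be the affine function interpolating $f$ on $\mathcal{Y}$, and let $y_0\in\mathbb{R}^n$. Let $G$, $H^\star$ and $\{\mu_{ij}\}_{i\in\mathcal{I}_+,j\in\mathcal{I}_-}$ be as in the context. If $\mu_{ij}\ge0$ for all $(i,j)\in\mathcal{I}_+\times\mathcal{I}_-$, then $$|m(y_0)-f(y_0)|\le\tfrac12\langle G,H^\star\rangle .$$
   Context: Let $n\ge1$, $L>0$. $C^{1,1}_L(\mathbb{R}^n)$ denotes the set of differentiable $f:\mathbb{R}^n\to\mathbb{R}$ with $\|\nabla f(u_1)-\nabla f(u_2)\|\le L\|u_1-u_2\|$ for all $u_1,u_2$. $m$ is the unique affine function with $m(y_i)=f(y_i)$, $i=1,\dots,n+1$. The barycentric coordinates of $y_0$ w.r.t. $\mathcal{Y}$ are the unique reals $\ell_1,\dots,\ell_{n+1}$ with $\sum_{i=1}^{n+1}\ell_i=1$, $\sum_{i=1}^{n+1}\ell_iy_i=y_0$; set $\ell_0=-1$. The points are ordered so that $\ell_1\ge\cdots\ge\ell_{n+1}$. Let $\mathcal{I}_+=\{i\in\{0,\dots,n+1\}:\ell_i>0\}=\{1,\dots,|\mathcal{I}_+|\}$, $\mathcal{I}_-=\{i\in\{0,\dots,n+1\}:\ell_i<0\}=\{0\}\cup\{n+3-|\mathcal{I}_-|,\dots,n+1\}$. Let $G=\sum_{i=0}^{n+1}\ell_iy_iy_i^T$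 with eigendecomposition $G=P\Lambda P^T$ ($P$ orthogonal, $\Lambda$ diagonal); let $P_+$ (resp. $P_-$) be the matrix of columns of $P$ belonging to positive (resp. negative) eigenvalues ($G$ has $|\mathcal{I}_+|-1$ positive and $|\mathcal{I}_-|-1$ negative eigenvalues), and $H^\star=L\,P\,\mathrm{sign}(\Lambda)P^T=L(P_+P_+^T-P_-P_-^T)$ (entrywise sign, $\mathrm{sign}(0)=0$). Let $Y\in\mathbb{R}^{(n+1)\times n}$ have $i$th row $(y_i-y_0)^T$; $Y_+$ consists of its first $|\mathcal{I}_+|$ rows, $Y_-$ of its last $|\mathcal{I}_-|-1$ rows; $\ell_+=(\ell_1,\dots,\ell_{|\mathcal{I}_+|})^T$. $Y_-P_-$ is invertible; set $M=\operatorname{diag}(\ell_+)Y_+P_-(Y_-P_-)^{-1}$, $\mu_{ij}=[M]_{i,(j-n-2+|\mathcal{I}_-|)}$ for $(i,j)\in\mathcal{I}_+\times(\mathcal{I}_-\setminus\{0\})$, and $\mu_{i0}=\ell_i-\sum_{j\in\mathcal{I}_-\setminus\{0\}}\mu_{ij}$ for $i\in\mathcal{I}_+$. For matrices, $\langle A,B\rangle=\sum_{i,j}A_{ij}B_{ij}$. *)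

theory Defs
  imports "HOL-Analysis.Analysis"
begin

definition C11 :: "real \<Rightarrow> (real^'n \<Rightarrow> real) \<Rightarrow> bool" where
  "C11 L f \<longleftrightarrow> (\<exists>g :: real^'n \<Rightarrow> real^'n.
      (\<forall>x. (f has_derivative (\<lambda>h. g x \<bullet> h)) (at x)) \<and>
      (\<forall>u1 u2. norm (g u1 - g u2) \<le> L * norm (u1 - u2)))"

definition outer :: "real^'n \<Rightarrow> real^'n \<Rightarrow> real^'n^'n" where
  "outer u v = (\<chi> a b. u$a * v$b)"

definition frob_inner :: "real^'n^'n \<Rightarrow> real^'n^'n \<Rightarrow> real" where
  "frob_inner A B = (\<Sum>a\<in>UNIV. \<Sum>b\<in>UNIV. A$a$b * B$a$b)"

definition mat_sign :: "real^'n^'n \<Rightarrow> real^'n^'n" where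
  "mat_sign A = (\<chi> a b. sgn (A$a$b))"

definition mat_inv_nat :: "nat \<Rightarrow> (nat \<Rightarrow> nat \<Rightarrow> real) \<Rightarrow> (nat \<Rightarrow> nat \<Rightarrow> real)" where
  "mat_inv_nat q A = (THE B.
      (\<forall>a<q. \<forall>b<q. (\<Sum>c<q. A a c * B c b) = (if a = b then 1 else 0)
                 \<and> (\<Sum>c<q. B a c * A c b) = (if a = b then 1 else 0))
    \<and> (\<forall>a b. q \<le> a \<or> q \<le> b \<longrightarrow> B a b = 0))"

text \<open>The matrix M = diag(l_+) Y_+ P_- (Y_- P_-)^{-1}, 0-based indices.
  N = dimension, p = |I_+|, q = |I_-| - 1; the columns of P_- are the columns
  column (ks!b) P, b < q.  Row a of Y_+ is y(a+1) - y 0; row a of Y_- is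
  y(N+2-q+a) - y 0.\<close>
definition M_mat :: "nat \<Rightarrow> nat \<Rightarrow> nat \<Rightarrow> (nat \<Rightarrow> real) \<Rightarrow> (nat \<Rightarrow> real^'n)
    \<Rightarrow> real^'n^'n \<Rightarrow> 'n list \<Rightarrow> nat \<Rightarrow> nat \<Rightarrow> real" where
  "M_mat N p q l y P ks =
     (let YpPm = (\<lambda>a b. (y (a + 1) - y 0) \<bullet> column (ks ! b) P);
          YmPm = (\<lambda>a b. (y (N + 2 - q + a) - y 0) \<bullet> column (ks ! b) P);
          Inv = mat_inv_nat q YmPm
      in (\<lambda>a c. l (a + 1) * (\<Sum>b<q. YpPm a b * Inv b c)))"

definition mu :: "nat \<Rightarrow> nat \<Rightarrow> nat \<Rightarrow> (nat \<Rightarrow> real) \<Rightarrow> (nat \<Rightarrow> real^'n)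
    \<Rightarrow> real^'n^'n \<Rightarrow> 'n list \<Rightarrow> nat \<Rightarrow> nat \<Rightarrow> real" where
  "mu N p q l y P ks i j =
     (if j = 0 then l i - (\<Sum>j'\<in>{N + 2 - q..N + 1}. M_mat N p q l y P ks (i - 1) (j' - (N + 2 - q)))
      else M_mat N p q l y P ks (i - 1) (j - (N + 2 - q)))"

end

theory Submission
  imports Defs
begin

lemma descent_aux:
  fixes f :: "real^'n \<Rightarrow> real" and g :: "real^'n \<Rightarrow> real^'n"
  assumes der: "\<forall>x. (f has_derivative (\<lambda>h. g x \<bullet> h)) (at x)"
    and lip: "\<forall>u v. norm (g u - g v) \<le> L * norm (u - v)"
  shows "f w - f x - g x \<bullet> (w - x) \<le> L/2 * norm (w - x)^2
       \<and> f w - f x - g x \<bullet> (w - x) \<ge> - (L/2 * norm (w - x)^2)"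
proof -
  define d where "d = w - x"
  define \<phi> where "\<phi> t = f (x + t *\<^sub>R d) - t * (g x \<bullet> d)" for t
  have D: "(\<phi> has_real_derivative ((g (x + t *\<^sub>R d) - g x) \<bullet> d)) (at t)" for t
  proof -
    have "((\<lambda>t. x + t *\<^sub>R d) has_derivative (\<lambda>s. s *\<^sub>R d)) (at t)"
      by (auto intro!: derivative_eq_intros)
    then have "((\<lambda>t. f (x + t *\<^sub>R d)) has_derivative (\<lambda>s. g (x + t *\<^sub>R d) \<bullet> (s *\<^sub>R d))) (at t)"
    proof -
      have "((f \<circ> (\<lambda>t. x + t *\<^sub>R d)) has_derivative ((\<lambda>h. g (x + t *\<^sub>R d) \<bullet> h) \<circ> (\<lambda>s. s *\<^sub>R d))) (at t)"
        by (rule diff_chain_at) (use \<open>((\<lambda>t. x + t *\<^sub>R d) has_derivative (\<lambda>s. s *\<^sub>R d)) (at t)\<close> der in auto)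
      then show ?thesis by (simp add: o_def)
    qed
    then have "((\<lambda>t. f (x + t *\<^sub>R d) - t * (g x \<bullet> d)) has_derivative
        (\<lambda>s. g (x + t *\<^sub>R d) \<bullet> (s *\<^sub>R d) - s * (g x \<bullet> d))) (at t)"
      by (auto intro!: derivative_eq_intros)
    moreover have "(\<lambda>s. g (x + t *\<^sub>R d) \<bullet> (s *\<^sub>R d) - s * (g x \<bullet> d)) = (*) ((g (x + t *\<^sub>R d) - g x) \<bullet> d)"
      by (rule ext) (simp add: algebra_simps inner_diff_left)
    ultimately show ?thesis unfolding \<phi>_def has_field_derivative_def
      by simp
  qed
  have bnd: "\<bar>(g (x + t *\<^sub>R d) - g x) \<bullet> d\<bar> \<le> L * t * norm d ^ 2" if "0 \<le> t" for t
  proof -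
    have "\<bar>(g (x + t *\<^sub>R d) - g x) \<bullet> d\<bar> \<le> norm (g (x + t *\<^sub>R d) - g x) * norm d"
      by (rule Cauchy_Schwarz_ineq2)
    also have "\<dots> \<le> L * norm (t *\<^sub>R d) * norm d"
      using lip[rule_format, of "x + t *\<^sub>R d" x] by (simp add: mult_right_mono)
    also have "\<dots> = L * t * norm d ^ 2" using that by (simp add: power2_eq_square)
    finally show ?thesis .
  qed
  have c: "continuous_on {0..1} h" if "\<And>t. (h has_real_derivative h' t) (at t)" for h h'
    using that by (meson DERIV_isCont continuous_at_imp_continuous_on)
  have up: "(\<lambda>t. \<phi> t - L/2 * t^2 * norm d ^ 2) 1 \<le> (\<lambda>t. \<phi> t - L/2 * t^2 * norm d ^ 2) 0"
  proof (rule DERIV_nonpos_imp_decreasing_open[of 0 1])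
    fix t :: real assume t: "0 < t" "t < 1"
    have "((\<lambda>t. \<phi> t - L/2 * t^2 * norm d ^ 2) has_real_derivative
       ((g (x + t *\<^sub>R d) - g x) \<bullet> d - L * t * norm d ^ 2)) (at t)"
      by (auto intro!: derivative_eq_intros D)
    moreover have "(g (x + t *\<^sub>R d) - g x) \<bullet> d - L * t * norm d ^ 2 \<le> 0"
      using bnd[of t] t by linarith
    ultimately show "\<exists>y. ((\<lambda>t. \<phi> t - L/2 * t^2 * norm d ^ 2) has_real_derivative y) (at t) \<and> y \<le> 0"
      by blast
  next
    show "continuous_on {0..1} (\<lambda>t. \<phi> t - L / 2 * t\<^sup>2 * (norm d)\<^sup>2)"
      by (rule c[where h'="\<lambda>t. (g (x + t *\<^sub>R d) - g x) \<bullet> d - L * t * norm d ^ 2"])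
         (auto intro!: derivative_eq_intros D)
  qed simp
  have lo: "(\<lambda>t. \<phi> t + L/2 * t^2 * norm d ^ 2) 0 \<le> (\<lambda>t. \<phi> t + L/2 * t^2 * norm d ^ 2) 1"
  proof (rule DERIV_nonneg_imp_increasing_open[of 0 1])
    fix t :: real assume t: "0 < t" "t < 1"
    have "((\<lambda>t. \<phi> t + L/2 * t^2 * norm d ^ 2) has_real_derivative
       ((g (x + t *\<^sub>R d) - g x) \<bullet> d + L * t * norm d ^ 2)) (at t)"
      by (auto intro!: derivative_eq_intros D)
    moreover have "(g (x + t *\<^sub>R d) - g x) \<bullet> d + L * t * norm d ^ 2 \<ge> 0"
      using bnd[of t] t by linarith
    ultimately show "\<exists>y. ((\<lambda>t. \<phi> t + L/2 * t^2 * norm d ^ 2) has_real_derivative y) (at t) \<and> y \<ge> 0"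
      by blast
  next
    show "continuous_on {0..1} (\<lambda>t. \<phi> t + L / 2 * t\<^sup>2 * (norm d)\<^sup>2)"
      by (rule c[where h'="\<lambda>t. (g (x + t *\<^sub>R d) - g x) \<bullet> d + L * t * norm d ^ 2"])
         (auto intro!: derivative_eq_intros D)
  qed simp
  have "\<phi> 1 - \<phi> 0 = f w - f x - g x \<bullet> (w - x)" by (simp add: \<phi>_def d_def)
  then show ?thesis using up lo by (simp add: d_def)
qed



lemma core:
  fixes f :: "real^'n \<Rightarrow> real" and g :: "real^'n \<Rightarrow> real^'n"
    and y :: "nat \<Rightarrow> real^'n" and B :: "real^'n \<Rightarrow> real^'n"
    and \<mu> :: "nat \<Rightarrow> nat \<Rightarrow> real" and a c :: "nat \<Rightarrow> real"
  assumes der: "\<forall>x. (f has_derivative (\<lambda>h. g x \<bullet> h)) (at x)"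
    and lip: "\<forall>u v. norm (g u - g v) \<le> L * norm (u - v)"
    and fin: "finite I" "finite J"
    and nn: "\<And>i j. i \<in> I \<Longrightarrow> j \<in> J \<Longrightarrow> \<mu> i j \<ge> 0"
    and rs: "\<And>i. i \<in> I \<Longrightarrow> (\<Sum>j\<in>J. \<mu> i j) = a i"
    and rB: "\<And>i. i \<in> I \<Longrightarrow> (\<Sum>j\<in>J. \<mu> i j *\<^sub>R B (y j)) = a i *\<^sub>R B (y i)"
    and cs: "\<And>j. j \<in> J \<Longrightarrow> (\<Sum>i\<in>I. \<mu> i j) = c j"
    and cQ: "\<And>j. j \<in> J \<Longrightarrow> (\<Sum>i\<in>I. \<mu> i j *\<^sub>R (y i - B (y i))) = c j *\<^sub>R (y j - B (y j))"
  shows "(\<Sum>i\<in>I. a i * f (y i)) - (\<Sum>j\<in>J. c j * f (y j)) \<le>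
     L/2 * ((\<Sum>i\<in>I. a i * (norm (y i - B (y i))^2 - norm (B (y i))^2))
          - (\<Sum>j\<in>J. c j * (norm (y j - B (y j))^2 - norm (B (y j))^2)))"
proof -
  define Q where "Q k = y k - B (y k)" for k
  define By where "By k = B (y k)" for k
  have pair: "f (y i) - f (y j) \<le> - (g (y i) \<bullet> (By j - By i)) + L/2 * norm (By j - By i)^2
        + g (y j) \<bullet> (Q i - Q j) + L/2 * norm (Q i - Q j)^2" for i j
  proof -
    define w where "w = y i + By j - By i"
    have 1: "f w - f (y i) - g (y i) \<bullet> (w - y i) \<ge> - (L/2 * norm (w - y i)^2)"
      using descent_aux[OF der lip] by blast
    have 2: "f w - f (y j) - g (y j) \<bullet> (w - y j) \<le> L/2 * norm (w - y j)^2"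
      using descent_aux[OF der lip] by blast
    have "w - y i = By j - By i" "w - y j = Q i - Q j" by (auto simp: w_def Q_def By_def)
    then show ?thesis using 1 2 by simp
  qed
  have lhs: "(\<Sum>i\<in>I. a i * f (y i)) - (\<Sum>j\<in>J. c j * f (y j)) = (\<Sum>i\<in>I. \<Sum>j\<in>J. \<mu> i j * (f (y i) - f (y j)))"
  proof -
    have "(\<Sum>i\<in>I. a i * f (y i)) = (\<Sum>i\<in>I. \<Sum>j\<in>J. \<mu> i j * f (y i))"
      by (simp add: rs sum_distrib_right[symmetric])
    moreover have "(\<Sum>j\<in>J. c j * f (y j)) = (\<Sum>i\<in>I. \<Sum>j\<in>J. \<mu> i j * f (y j))"
      by (subst sum.swap) (simp add: cs sum_distrib_right[symmetric])
    ultimately show ?thesis by (simp add: right_diff_distrib sum_subtractf)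
  qed
  also have "\<dots> \<le> (\<Sum>i\<in>I. \<Sum>j\<in>J. \<mu> i j * (- (g (y i) \<bullet> (By j - By i)) + L/2 * norm (By j - By i)^2
        + g (y j) \<bullet> (Q i - Q j) + L/2 * norm (Q i - Q j)^2))"
    by (intro sum_mono mult_left_mono pair nn)
  also have "\<dots> = - (\<Sum>i\<in>I. g (y i) \<bullet> (\<Sum>j\<in>J. \<mu> i j *\<^sub>R (By j - By i)))
       + L/2 * (\<Sum>i\<in>I. \<Sum>j\<in>J. \<mu> i j * norm (By j - By i)^2)
       + (\<Sum>j\<in>J. g (y j) \<bullet> (\<Sum>i\<in>I. \<mu> i j *\<^sub>R (Q i - Q j)))
       + L/2 * (\<Sum>j\<in>J. \<Sum>i\<in>I. \<mu> i j * norm (Q i - Q j)^2)" (is "_ = ?rhs")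
  proof -
    have "(\<Sum>i\<in>I. \<Sum>j\<in>J. \<mu> i j * (- (g (y i) \<bullet> (By j - By i)) + L/2 * norm (By j - By i)^2
        + g (y j) \<bullet> (Q i - Q j) + L/2 * norm (Q i - Q j)^2)) =
      (\<Sum>i\<in>I. \<Sum>j\<in>J. (- (g (y i) \<bullet> (\<mu> i j *\<^sub>R (By j - By i))) + L/2 * (\<mu> i j * norm (By j - By i)^2))
        + (g (y j) \<bullet> (\<mu> i j *\<^sub>R (Q i - Q j)) + L/2 * (\<mu> i j * norm (Q i - Q j)^2)))"
      by (intro sum.cong refl) (simp add: algebra_simps)
    also have "\<dots> = (\<Sum>i\<in>I. \<Sum>j\<in>J. (- (g (y i) \<bullet> (\<mu> i j *\<^sub>R (By j - By i))) + L/2 * (\<mu> i j * norm (By j - By i)^2)))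
       + (\<Sum>j\<in>J. \<Sum>i\<in>I. (g (y j) \<bullet> (\<mu> i j *\<^sub>R (Q i - Q j)) + L/2 * (\<mu> i j * norm (Q i - Q j)^2)))"
      by (simp add: sum.distrib sum.swap[of _ J I])
    also have "\<dots> = ?rhs"
      by (simp add: sum.distrib sum_negf inner_sum_right sum_distrib_left sum_subtractf)
    finally show ?thesis .
  qed
  also have "(\<Sum>i\<in>I. g (y i) \<bullet> (\<Sum>j\<in>J. \<mu> i j *\<^sub>R (By j - By i))) = 0"
  proof (rule sum.neutral, intro ballI)
    fix i assume i: "i \<in> I"
    have "(\<Sum>j\<in>J. \<mu> i j *\<^sub>R (By j - By i)) = (\<Sum>j\<in>J. \<mu> i j *\<^sub>R By j) - (\<Sum>j\<in>J. \<mu> i j) *\<^sub>R By i"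
      by (simp add: scaleR_diff_right sum_subtractf scaleR_sum_left)
    also have "\<dots> = 0" using rB[OF i] rs[OF i] by (simp add: By_def)
    finally show "g (y i) \<bullet> (\<Sum>j\<in>J. \<mu> i j *\<^sub>R (By j - By i)) = 0" by simp
  qed
  also have "(\<Sum>j\<in>J. g (y j) \<bullet> (\<Sum>i\<in>I. \<mu> i j *\<^sub>R (Q i - Q j))) = 0"
  proof (rule sum.neutral, intro ballI)
    fix j assume j: "j \<in> J"
    have "(\<Sum>i\<in>I. \<mu> i j *\<^sub>R (Q i - Q j)) = (\<Sum>i\<in>I. \<mu> i j *\<^sub>R Q i) - (\<Sum>i\<in>I. \<mu> i j) *\<^sub>R Q j"
      by (simp add: scaleR_diff_right sum_subtractf scaleR_sum_left)
    also have "\<dots> = 0" using cQ[OF j] cs[OF j] by (simp add: Q_def)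
    finally show "g (y j) \<bullet> (\<Sum>i\<in>I. \<mu> i j *\<^sub>R (Q i - Q j)) = 0" by simp
  qed
  also have "(\<Sum>i\<in>I. \<Sum>j\<in>J. \<mu> i j * norm (By j - By i)^2) =
      (\<Sum>j\<in>J. c j * norm (By j)^2) - (\<Sum>i\<in>I. a i * norm (By i)^2)"
  proof -
    have e: "\<mu> i j * norm (By j - By i)^2 = \<mu> i j * norm (By j)^2 - 2 * ((\<mu> i j *\<^sub>R By j) \<bullet> By i) + \<mu> i j * norm (By i)^2" for i j
      by (simp add: power2_norm_eq_inner inner_diff_left inner_diff_right inner_commute algebra_simps)
    have s2: "(\<Sum>i\<in>I. \<Sum>j\<in>J. (\<mu> i j *\<^sub>R By j) \<bullet> By i) = (\<Sum>i\<in>I. a i * norm (By i)^2)"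
    proof (intro sum.cong refl)
      fix i assume i: "i \<in> I"
      have "(\<Sum>j\<in>J. (\<mu> i j *\<^sub>R By j) \<bullet> By i) = (\<Sum>j\<in>J. \<mu> i j *\<^sub>R By j) \<bullet> By i"
        by (simp add: inner_sum_left)
      also have "\<dots> = a i * norm (By i)^2" using rB[OF i] by (simp add: By_def power2_norm_eq_inner)
      finally show "(\<Sum>j\<in>J. (\<mu> i j *\<^sub>R By j) \<bullet> By i) = a i * norm (By i)^2" .
    qed
    have s1: "(\<Sum>i\<in>I. \<Sum>j\<in>J. \<mu> i j * norm (By j)^2) = (\<Sum>j\<in>J. c j * norm (By j)^2)"
      by (subst sum.swap) (simp add: cs sum_distrib_right[symmetric])
    have s3: "(\<Sum>i\<in>I. \<Sum>j\<in>J. \<mu> i j * norm (By i)^2) = (\<Sum>i\<in>I. a i * norm (By i)^2)"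
      by (simp add: rs sum_distrib_right[symmetric])
    show ?thesis unfolding e using s1 s2 s3
      by (simp add: sum.distrib sum_subtractf sum_distrib_left[symmetric])
  qed
  also have "(\<Sum>j\<in>J. \<Sum>i\<in>I. \<mu> i j * norm (Q i - Q j)^2) =
      (\<Sum>i\<in>I. a i * norm (Q i)^2) - (\<Sum>j\<in>J. c j * norm (Q j)^2)"
  proof -
    have e: "\<mu> i j * norm (Q i - Q j)^2 = \<mu> i j * norm (Q i)^2 - 2 * ((\<mu> i j *\<^sub>R Q i) \<bullet> Q j) + \<mu> i j * norm (Q j)^2" for i j
      by (simp add: power2_norm_eq_inner inner_diff_left inner_diff_right inner_commute algebra_simps)
    have s2: "(\<Sum>j\<in>J. \<Sum>i\<in>I. (\<mu> i j *\<^sub>R Q i) \<bullet> Q j) = (\<Sum>j\<in>J. c j * norm (Q j)^2)"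
    proof (intro sum.cong refl)
      fix j assume j: "j \<in> J"
      have "(\<Sum>i\<in>I. (\<mu> i j *\<^sub>R Q i) \<bullet> Q j) = (\<Sum>i\<in>I. \<mu> i j *\<^sub>R Q i) \<bullet> Q j"
        by (simp add: inner_sum_left)
      also have "\<dots> = c j * norm (Q j)^2" using cQ[OF j] by (simp add: Q_def power2_norm_eq_inner)
      finally show "(\<Sum>i\<in>I. (\<mu> i j *\<^sub>R Q i) \<bullet> Q j) = c j * norm (Q j)^2" .
    qed
    have s1: "(\<Sum>j\<in>J. \<Sum>i\<in>I. \<mu> i j * norm (Q i)^2) = (\<Sum>i\<in>I. a i * norm (Q i)^2)"
      by (subst sum.swap) (simp add: rs sum_distrib_right[symmetric])
    have s3: "(\<Sum>j\<in>J. \<Sum>i\<in>I. \<mu> i j * norm (Q j)^2) = (\<Sum>j\<in>J. c j * norm (Q j)^2)"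
      by (simp add: cs sum_distrib_right[symmetric])
    show ?thesis unfolding e using s1 s2 s3
      by (simp add: sum.distrib sum_subtractf sum_distrib_left[symmetric])
  qed
  finally show ?thesis
    by (simp add: Q_def By_def algebra_simps sum_subtractf sum.distrib)
qed



lemma upclosed_interval:
  fixes S :: "nat set"
  assumes sub: "S \<subseteq> {a..b}" and up: "\<And>x z. x \<in> S \<Longrightarrow> x \<le> z \<Longrightarrow> z \<le> b \<Longrightarrow> z \<in> S"
  shows "S = {Suc b - card S..b}"
proof (cases "S = {}")
  case True then show ?thesis by simp
next
  case False
  have fin: "finite S" using sub finite_subset by blast
  define m where "m = Min S"
  have m: "m \<in> S" using False fin by (simp add: m_def)
  have "S = {m..b}"
  proof
    show "S \<subseteq> {m..b}" using sub fin by (auto simp: m_def)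
    show "{m..b} \<subseteq> S" using up m by auto
  qed
  moreover have "m \<le> b" using m sub by auto
  ultimately show ?thesis by simp
qed

locale lin =
  fixes y :: "nat \<Rightarrow> real^'n" and l :: "nat \<Rightarrow> real" and P Lam :: "real^'n^'n" and ks :: "'n list"
    and N q :: nat
  assumes N_def: "N = CARD('n)"
    and q_def: "q = card {i \<in> {0..N + 1}. l i < 0} - 1"
    and inj: "inj_on y {1..N + 1}"
    and aff_indep: "\<not> affine_dependent (y ` {1..N + 1})"
    and bary_sum: "(\<Sum>i = 1..N + 1. l i) = 1"
    and bary_pt: "(\<Sum>i = 1..N + 1. l i *\<^sub>R y i) = y 0"
    and l0: "l 0 = -1"
    and ordered: "\<forall>i j. 1 \<le> i \<and> i \<le> j \<and> j \<le> N + 1 \<longrightarrow> l j \<le> l i"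
    and P_orth: "orthogonal_matrix P"
    and Lam_diag: "\<forall>a b. a \<noteq> b \<longrightarrow> Lam $ a $ b = 0"
    and G_eig: "(\<Sum>i = 0..N + 1. l i *\<^sub>R outer (y i) (y i)) = P ** Lam ** transpose P"
    and ks_distinct: "distinct ks"
    and ks_set: "set ks = {k. Lam $ k $ k < 0}"
begin

definition Jn where "Jn = {j \<in> {1..N+1}. l j < 0}"

lemma split0: "{0..N+1} = insert 0 {1..N+1}" by auto

lemma sum_l0: "(\<Sum>k=0..N+1. l k) = 0"
  using bary_sum l0 by (subst sum.atLeast_Suc_atMost) auto

lemma sum_ly0: "(\<Sum>k=0..N+1. l k *\<^sub>R y k) = 0"
  using bary_pt l0 by (subst sum.atLeast_Suc_atMost) auto

lemma l1_pos: "l 1 > 0"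
proof (rule ccontr)
  assume "\<not> l 1 > 0"
  then have "\<forall>i\<in>{1..N+1}. l i \<le> 0" using ordered by (metis atLeastAtMost_iff not_le order_trans order_refl)
  then have "(\<Sum>i = 1..N + 1. l i) \<le> 0" by (intro sum_nonpos) auto
  then show False using bary_sum by simp
qed

lemma Ineg_eq: "{i \<in> {0..N + 1}. l i < 0} = insert 0 Jn"
  using l0 by (auto simp: Jn_def)

lemma q_card: "q = card Jn"
proof -
  have "finite Jn" "0 \<notin> Jn" by (auto simp: Jn_def)
  then show ?thesis unfolding q_def Ineg_eq by simp
qed

lemma Jn_sub: "Jn \<subseteq> {2..N+1}"
proof
  fix j assume "j \<in> Jn"
  then have "1 \<le> j" "j \<le> N+1" "l j < 0" by (auto simp: Jn_def)
  moreover have "j \<noteq> 1" using l1_pos \<open>l j < 0\<close> by auto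
  ultimately show "j \<in> {2..N+1}" by auto
qed

lemma q_le: "q \<le> N"
proof -
  have "card Jn \<le> card {2..N+1}" using Jn_sub by (intro card_mono) auto
  then show ?thesis by (simp add: q_card)
qed

lemma Jn_eq: "Jn = {N+2-q..N+1}"
proof -
  have "Jn = {Suc (N+1) - card Jn..N+1}"
  proof (rule upclosed_interval[of _ 1])
    show "Jn \<subseteq> {1..N+1}" by (auto simp: Jn_def)
    fix x z assume "x \<in> Jn" "x \<le> z" "z \<le> N+1"
    then have "1 \<le> x" "l x < 0" by (auto simp: Jn_def)
    moreover have "l z \<le> l x" using ordered \<open>1 \<le> x\<close> \<open>x \<le> z\<close> \<open>z \<le> N+1\<close> by blast
    ultimately show "z \<in> Jn" using \<open>x \<le> z\<close> \<open>z \<le> N+1\<close> by (auto simp: Jn_def)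
  qed
  then show ?thesis by (simp add: q_card)
qed

end


lemma diag_prod_entry:
  fixes P D :: "real^'n^'n"
  assumes "\<forall>a b. a \<noteq> b \<longrightarrow> D $ a $ b = 0"
  shows "(P ** D ** transpose P) $ a $ b = (\<Sum>k\<in>UNIV. P $ a $ k * D $ k $ k * P $ b $ k)"
proof -
  have "(P ** D ** transpose P) $ a $ b = (\<Sum>k\<in>UNIV. (\<Sum>j\<in>UNIV. P $ a $ j * D $ j $ k) * P $ b $ k)"
    by (simp add: matrix_matrix_mult_def transpose_def)
  also have "\<dots> = (\<Sum>k\<in>UNIV. P $ a $ k * D $ k $ k * P $ b $ k)"
  proof (intro sum.cong refl)
    fix k
    have "(\<Sum>j\<in>UNIV. P $ a $ j * D $ j $ k) = P $ a $ k * D $ k $ k"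
      using assms by (subst sum.remove[of _ k]) (auto intro!: sum.neutral)
    then show "(\<Sum>j\<in>UNIV. P $ a $ j * D $ j $ k) * P $ b $ k = P $ a $ k * D $ k $ k * P $ b $ k" by simp
  qed
  finally show ?thesis .
qed

lemma outer_quad:
  fixes u a b :: "real^'n"
  shows "a \<bullet> (outer u u *v b) = (u \<bullet> a) * (u \<bullet> b)"
  by (simp add: outer_def matrix_vector_mult_def inner_vec_def sum_distrib_left sum_distrib_right
      algebra_simps) (subst sum.swap, simp add: algebra_simps)

lemma swap3: "(\<Sum>i\<in>A. \<Sum>j\<in>B. \<Sum>k\<in>C. F i j k) = (\<Sum>k\<in>C. \<Sum>i\<in>A. \<Sum>j\<in>B. F i j k)"
proof -
  have "(\<Sum>i\<in>A. \<Sum>j\<in>B. \<Sum>k\<in>C. F i j k) = (\<Sum>i\<in>A. \<Sum>k\<in>C. \<Sum>j\<in>B. F i j k)"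
    by (rule sum.cong[OF refl], rule sum.swap)
  also have "\<dots> = (\<Sum>k\<in>C. \<Sum>i\<in>A. \<Sum>j\<in>B. F i j k)" by (rule sum.swap)
  finally show ?thesis .
qed

lemma sum_mat_vec:
  fixes A :: "nat \<Rightarrow> real^'n^'n"
  shows "(\<Sum>i\<in>S. A i) *v b = (\<Sum>i\<in>S. A i *v b)"
  by (induction S rule: infinite_finite_induct) (auto simp: matrix_vector_mult_add_rdistrib)

context lin begin

definition col where "col k = column k P"

lemma PtP: "transpose P ** P = mat 1" and PPt: "P ** transpose P = mat 1"
  using P_orth unfolding orthogonal_matrix_def by (auto simp: matrix_left_right_inverse)

lemma col_inner: "col i \<bullet> col j = (if i = j then 1 else 0)"
proof -
  have "(transpose P ** P) $ i $ j = col i \<bullet> col j"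
    by (simp add: matrix_matrix_mult_def transpose_def col_def column_def inner_vec_def)
  then show ?thesis using PtP by (simp add: mat_def)
qed

lemma col_inner_sum:
  assumes "finite S"
  shows "col j \<bullet> (\<Sum>k\<in>S. c k *\<^sub>R col k) = (if j \<in> S then c j else 0)"
proof -
  have "col j \<bullet> (\<Sum>k\<in>S. c k *\<^sub>R col k) = (\<Sum>k\<in>S. c k * (if j = k then 1 else 0))"
    by (simp add: inner_sum_right col_inner)
  also have "\<dots> = (if j \<in> S then c j else 0)"
    using assms by (simp add: if_distrib[of "\<lambda>x. _ * x"] sum.If_cases[of S] cong: if_cong)
  finally show ?thesis .
qed

lemma norm_sum_col:
  assumes "finite S"
  shows "norm (\<Sum>k\<in>S. c k *\<^sub>R col k)^2 = (\<Sum>k\<in>S. c k ^ 2)"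
proof -
  have "norm (\<Sum>k\<in>S. c k *\<^sub>R col k)^2 = (\<Sum>k\<in>S. c k *\<^sub>R col k) \<bullet> (\<Sum>k\<in>S. c k *\<^sub>R col k)"
    by (simp add: power2_norm_eq_inner)
  also have "\<dots> = (\<Sum>j\<in>S. c j * (col j \<bullet> (\<Sum>k\<in>S. c k *\<^sub>R col k)))"
    by (simp add: inner_sum_left)
  also have "\<dots> = (\<Sum>k\<in>S. c k ^ 2)"
    using assms by (intro sum.cong refl) (simp add: col_inner_sum power2_eq_square)
  finally show ?thesis .
qed

lemma expand: "v = (\<Sum>k\<in>UNIV. (col k \<bullet> v) *\<^sub>R col k)"
proof -
  have "(\<Sum>k\<in>UNIV. (col k \<bullet> v) *\<^sub>R col k) $ i = v $ i" for i
  proof -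
    have "(\<Sum>k\<in>UNIV. (col k \<bullet> v) *\<^sub>R col k) $ i = (\<Sum>k\<in>UNIV. (\<Sum>j\<in>UNIV. P $ j $ k * v $ j) * P $ i $ k)"
      by (simp add: col_def column_def inner_vec_def)
    also have "\<dots> = (\<Sum>k\<in>UNIV. \<Sum>j\<in>UNIV. P $ i $ k * P $ j $ k * v $ j)"
      by (simp add: sum_distrib_right sum_distrib_left algebra_simps)
    also have "\<dots> = (\<Sum>j\<in>UNIV. \<Sum>k\<in>UNIV. P $ i $ k * P $ j $ k * v $ j)"
      by (rule sum.swap)
    also have "\<dots> = (\<Sum>j\<in>UNIV. (P ** transpose P) $ i $ j * v $ j)"
      by (simp add: matrix_matrix_mult_def transpose_def sum_distrib_right)
    also have "\<dots> = v $ i" using PPt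
      by (simp add: mat_def if_distrib[of "\<lambda>x. x * _"] cong: if_cong)
    finally show ?thesis .
  qed
  then show ?thesis by (simp add: vec_eq_iff)
qed

definition G where "G = (\<Sum>i = 0..N + 1. l i *\<^sub>R outer (y i) (y i))"

lemma G_quad: "a \<bullet> (G *v b) = (\<Sum>i = 0..N + 1. l i * (y i \<bullet> a) * (y i \<bullet> b))"
  unfolding G_def sum_mat_vec inner_sum_right
  by (intro sum.cong refl) (simp add: scaleR_matrix_vector_assoc[symmetric] outer_quad)

lemma G_eig_quad: "a \<bullet> (G *v b) = (\<Sum>k\<in>UNIV. Lam $ k $ k * (col k \<bullet> a) * (col k \<bullet> b))"
proof -
  have "a \<bullet> (G *v b) = (\<Sum>i\<in>UNIV. \<Sum>j\<in>UNIV. a $ i * (P ** Lam ** transpose P) $ i $ j * b $ j)"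
    by (simp add: G_def[symmetric] G_eig[folded G_def] inner_vec_def matrix_vector_mult_def sum_distrib_left
        algebra_simps)
  also have "\<dots> = (\<Sum>i\<in>UNIV. \<Sum>j\<in>UNIV. \<Sum>k\<in>UNIV. a $ i * P $ i $ k * Lam $ k $ k * P $ j $ k * b $ j)"
    by (simp add: diag_prod_entry[OF Lam_diag] sum_distrib_left sum_distrib_right algebra_simps)
  also have "\<dots> = (\<Sum>k\<in>UNIV. \<Sum>i\<in>UNIV. \<Sum>j\<in>UNIV. a $ i * P $ i $ k * Lam $ k $ k * P $ j $ k * b $ j)"
    by (rule swap3)
  also have "\<dots> = (\<Sum>k\<in>UNIV. Lam $ k $ k * (col k \<bullet> a) * (col k \<bullet> b))"
    by (simp add: col_def column_def inner_vec_def sum_distrib_left sum_distrib_right algebra_simps)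
  finally show ?thesis .
qed

end


context lin begin

lemma quad_transl: "v \<bullet> (G *v v) = (\<Sum>i = 0..N + 1. l i * ((y i - c) \<bullet> v)^2)"
proof -
  have e: "l i * ((y i - c) \<bullet> v)^2 = l i * (y i \<bullet> v) * (y i \<bullet> v) - 2 * (c \<bullet> v) * (l i * (y i \<bullet> v)) + (c \<bullet> v)^2 * l i" for i
    by (simp add: inner_diff_left power2_eq_square algebra_simps)
  have s1: "(\<Sum>i = 0..N + 1. l i * (y i \<bullet> v)) = 0"
    using sum_ly0 by (metis (no_types, lifting) inner_scaleR_left inner_sum_left inner_zero_left sum.cong)
  show ?thesis
    unfolding e G_quad sum.distrib sum_subtractf sum_distrib_left[symmetric] s1 sum_l0 by simp
qed

lemma quad_eig: "v \<bullet> (G *v v) = (\<Sum>k\<in>UNIV. Lam $ k $ k * (col k \<bullet> v)^2)"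
  by (simp add: G_eig_quad power2_eq_square algebra_simps)

lemma span_diffs: "span ((\<lambda>i. y i - y 1) ` {2..N+1}) = UNIV"
proof -
  have eq: "y ` {1..N+1} = insert (y 1) (y ` {2..N+1})" by (auto simp: image_def) (metis One_nat_def Suc_1 atLeastAtMost_iff le_antisym not_less_eq_eq)
  have nin: "y 1 \<notin> y ` {2..N+1}"
  proof
    assume "y 1 \<in> y ` {2..N+1}"
    then obtain x where x: "x \<in> {2..N+1}" "y 1 = y x" by auto
    then have "1 = x" using inj_onD[OF inj x(2)] by auto
    then show False using x by auto
  qed
  have ind: "independent ((\<lambda>x. - y 1 + x) ` y ` {2..N+1})"
    using aff_indep unfolding eq affine_dependent_iff_dependent[OF nin] .
  have im: "(\<lambda>x. - y 1 + x) ` y ` {2..N+1} = (\<lambda>i. y i - y 1) ` {2..N+1}" by (auto simp: image_def)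
  have injd: "inj_on (\<lambda>i. y i - y 1) {2..N+1}"
    using inj by (auto simp: inj_on_def)
  have card: "card ((\<lambda>i. y i - y 1) ` {2..N+1}) = N" using card_image[OF injd] by simp
  have "UNIV \<subseteq> span ((\<lambda>i. y i - y 1) ` {2..N+1})"
    by (rule card_ge_dim_independent) (use ind im card N_def in auto)
  then show ?thesis by auto
qed

lemma ortho_all_zero:
  assumes "\<And>i. i \<in> {2..N+1} \<Longrightarrow> (y i - y 1) \<bullet> v = 0"
  shows "v = 0"
proof -
  have "orthogonal v v"
    by (rule orthogonal_to_span[of v "(\<lambda>i. y i - y 1) ` {2..N+1}"])
       (use span_diffs assms in \<open>auto simp: orthogonal_def inner_commute\<close>)
  then show ?thesis by (simp add: orthogonal_def)
qed

lemma col_inj: "inj col"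
proof
  fix a b assume "col a = col b"
  then have "col a \<bullet> col b = 1" using col_inner[of a a] by simp
  then show "a = b" using col_inner[of a b] by (auto split: if_splits)
qed

lemma q_le_len: "q \<le> length ks"
proof -
  define S where "S = {k \<in> {2..N+1}. l k \<ge> 0}"
  define V where "V = (\<lambda>k. y k - y 1) ` S"
  define W where "W = {v. \<forall>x \<in> span V. orthogonal x v}"
  define Kc where "Kc = - set ks"
  define E where "E = span (col ` Kc)"
  have cardS: "card S + q = N"
  proof -
    have "{2..N+1} = S \<union> Jn" using Jn_sub by (auto simp: S_def Jn_def)
    moreover have "S \<inter> Jn = {}" by (auto simp: S_def Jn_def)
    ultimately have "card {2..N+1} = card S + card Jn"
      by (metis card_Un_disjoint finite_Un finite_atLeastAtMost)
    then show ?thesis by (simp add: q_card)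
  qed
  have dimW: "dim W + dim (span V) = N"
    using dim_subspace_orthogonal_to_vectors[of "span V" UNIV] N_def
    by (simp add: W_def subspace_span)
  have "dim (span V) \<le> card S"
  proof -
    have fS: "finite S" by (simp add: S_def)
    have "dim V \<le> card V" by (rule dim_le_card') (simp add: V_def fS)
    also have "card V \<le> card S" unfolding V_def by (rule card_image_le[OF fS])
    finally show ?thesis by simp
  qed
  then have dW: "q \<le> dim W" using dimW cardS by linarith
  have indE: "independent (col ` Kc)"
  proof (rule pairwise_orthogonal_independent)
    show "pairwise orthogonal (col ` Kc)"
      unfolding pairwise_def orthogonal_def by (auto simp: col_inner)
    show "0 \<notin> col ` Kc"
    proof
      assume "0 \<in> col ` Kc"
      then obtain a where "col a = 0" by auto
      then show False using col_inner[of a a] by simp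
    qed
  qed
  have dE: "dim E = card Kc"
    unfolding E_def dim_span dim_eq_card_independent[OF indE]
    using card_image[OF inj_on_subset[OF col_inj]] by simp
  have cardKc: "card Kc + length ks = N"
  proof -
    have "card (set ks) + card Kc = CARD('n)"
      unfolding Kc_def using card_Un_disjoint[of "set ks" "- set ks"] by (simp add: Compl_partition)
    then show ?thesis using distinct_card[OF ks_distinct] N_def by simp
  qed
  have Wmem: "(y k - y 1) \<bullet> v = 0" if "v \<in> W" "k \<in> S" for v k
    using that by (auto simp: W_def V_def orthogonal_def span_base inner_commute)
  have Emem: "col k \<bullet> v = 0" if "v \<in> E" "k \<in> set ks" for v k
  proof -
    have "E \<subseteq> {v. col k \<bullet> v = 0}"
      unfolding E_def
      by (rule span_minimal) (use that in \<open>auto simp: Kc_def col_inner subspace_def inner_add_right\<close>)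
    then show ?thesis using that by auto
  qed
  have WE: "W \<inter> E \<subseteq> {0}"
  proof
    fix v assume v: "v \<in> W \<inter> E"
    have ge: "v \<bullet> (G *v v) \<ge> 0"
      unfolding quad_eig
    proof (rule sum_nonneg)
      fix k :: 'n
      show "0 \<le> Lam $ k $ k * (col k \<bullet> v)^2"
      proof (cases "k \<in> set ks")
        case True then show ?thesis using Emem v by simp
      next
        case False then have "Lam $ k $ k \<ge> 0" using ks_set by auto
        then show ?thesis by simp
      qed
    qed
    have terms: "l i * ((y i - y 1) \<bullet> v)^2 \<le> 0" if iin: "i \<in> {0..N+1}" for i
    proof -
      have "i = 1 \<or> i \<in> S \<or> l i < 0"
      proof (cases "i = 0")
        case True then show ?thesis using l0 by simp
      next
        case False then show ?thesis using iin by (auto simp: S_def)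
      qed
      then consider "i = 1" | "i \<in> S" | "l i < 0" by blast
      then show ?thesis
      proof cases
        case 1 then show ?thesis by simp
      next
        case 2 then show ?thesis using Wmem v by simp
      next
        case 3 then show ?thesis by (simp add: mult_nonpos_nonneg)
      qed
    qed
    have z: "v \<bullet> (G *v v) = 0"
    proof -
      have "(\<Sum>i = 0..N + 1. l i * ((y i - y 1) \<bullet> v)^2) \<le> 0"
        by (rule sum_nonpos) (use terms in blast)
      then show ?thesis using ge quad_transl[of v "y 1"] by linarith
    qed
    have each: "l i * ((y i - y 1) \<bullet> v)^2 = 0" if "i \<in> {0..N+1}" for i
    proof -
      have "(\<Sum>i = 0..N + 1. - (l i * ((y i - y 1) \<bullet> v)^2)) = 0"
        using z quad_transl[of v "y 1"] by (simp add: sum_negf)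
      then have "\<forall>i\<in>{0..N+1}. - (l i * ((y i - y 1) \<bullet> v)^2) = 0"
        using sum_nonneg_eq_0_iff[of "{0..N+1}" "\<lambda>i. - (l i * ((y i - y 1) \<bullet> v)^2)"] terms by auto
      then show ?thesis using that by auto
    qed
    have "v = 0"
    proof (rule ortho_all_zero)
      fix i assume i: "i \<in> {2..N+1}"
      show "(y i - y 1) \<bullet> v = 0"
      proof (cases "l i < 0")
        case True then show ?thesis using each[of i] i by simp
      next
        case False then have "i \<in> S" using i by (simp add: S_def)
        then show ?thesis using Wmem v by simp
      qed
    qed
    then show "v \<in> {0}" by simp
  qed
  have "dim {x + y |x y. x \<in> W \<and> y \<in> E} + dim (W \<inter> E) = dim W + dim E"
    by (rule dim_sums_Int) (auto simp: W_def E_def subspace_span subspace_orthogonal_to_vectors)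
  moreover have "dim (W \<inter> E) = 0" using WE by simp
  moreover have "dim {x + y |x y. x \<in> W \<and> y \<in> E} \<le> N" unfolding N_def by (rule dim_subset_UNIV_cart)
  ultimately show ?thesis using dW dE cardKc by linarith
qed

end


context lin begin

definition kk where "kk b = ks ! b"
definition Kset where "Kset = kk ` {..<q}"
definition Ym where "Ym = (\<lambda>a b. (y (N + 2 - q + a) - y 0) \<bullet> column (ks ! b) P)"

lemma kk_inj: "inj_on kk {..<q}"
  using ks_distinct q_le_len by (auto simp: inj_on_def kk_def nth_eq_iff_index_eq)

lemma kk_neg: "b < q \<Longrightarrow> Lam $ kk b $ kk b < 0"
  using ks_set q_le_len by (auto simp: kk_def)

lemma sum_K:
  assumes "\<And>z. z \<notin> Kset \<Longrightarrow> h z = 0"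
  shows "(\<Sum>z\<in>UNIV. h z) = (\<Sum>b<q. h (kk b))"
proof -
  have "(\<Sum>z\<in>UNIV. h z) = (\<Sum>z\<in>Kset. h z)"
    using assms by (intro sum.mono_neutral_right) auto
  also have "\<dots> = (\<Sum>b<q. h (kk b))"
    unfolding Kset_def by (rule sum.reindex[OF kk_inj, unfolded o_def])
  finally show ?thesis .
qed

lemma col_kk_sum: "col j \<bullet> (\<Sum>b<q. c b *\<^sub>R col (kk b)) = (if j \<in> Kset then c (the_inv_into {..<q} kk j) else 0)"
proof -
  have "(\<Sum>b<q. c b *\<^sub>R col (kk b)) = (\<Sum>k\<in>Kset. c (the_inv_into {..<q} kk k) *\<^sub>R col k)"
    unfolding Kset_def by (subst sum.reindex[OF kk_inj]) (auto simp: the_inv_into_f_f[OF kk_inj])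
  then show ?thesis by (simp add: col_inner_sum)
qed

lemma Ym_kernel:
  assumes "\<And>a. a < q \<Longrightarrow> (\<Sum>b<q. Ym a b * c b) = 0"
  shows "b < q \<Longrightarrow> c b = 0"
proof -
  define v where "v = (\<Sum>b<q. c b *\<^sub>R col (kk b))"
  have cv: "col (kk b) \<bullet> v = c b" if "b < q" for b
    using that by (simp add: v_def col_kk_sum Kset_def the_inv_into_f_f[OF kk_inj])
  have uv: "(y (N + 2 - q + a) - y 0) \<bullet> v = 0" if "a < q" for a
  proof -
    have "(y (N + 2 - q + a) - y 0) \<bullet> v = (\<Sum>b<q. Ym a b * c b)"
      by (simp add: v_def inner_sum_right Ym_def col_def kk_def mult.commute)
    then show ?thesis using assms that by simp
  qed
  have ge: "v \<bullet> (G *v v) \<ge> 0"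
    unfolding quad_transl[of v "y 0"]
  proof (rule sum_nonneg)
    fix i assume i: "i \<in> {0..N+1}"
    show "0 \<le> l i * ((y i - y 0) \<bullet> v)^2"
    proof (cases "l i < 0")
      case True
      then have "i = 0 \<or> i \<in> Jn" using i Ineg_eq by auto
      then show ?thesis
      proof
        assume "i \<in> Jn"
        then have ii: "N + 2 - q \<le> i" "i \<le> N + 1" unfolding Jn_eq by auto
        define a where "a = i - (N + 2 - q)"
        have "a < q" "i = N + 2 - q + a" using ii q_le by (auto simp: a_def)
        then show ?thesis using uv by simp
      qed simp
    qed simp
  qed
  have le: "v \<bullet> (G *v v) = (\<Sum>b<q. Lam $ kk b $ kk b * (c b)^2)"
    unfolding quad_eig
  proof (subst sum_K)
    show "\<And>z. z \<notin> Kset \<Longrightarrow> Lam $ z $ z * (col z \<bullet> v)\<^sup>2 = 0"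
      by (simp add: v_def col_kk_sum)
    show "(\<Sum>b<q. Lam $ kk b $ kk b * (col (kk b) \<bullet> v)\<^sup>2) = (\<Sum>b<q. Lam $ kk b $ kk b * (c b)\<^sup>2)"
      by (intro sum.cong refl) (simp add: cv)
  qed
  have terms: "Lam $ kk b $ kk b * (c b)^2 \<le> 0" if "b < q" for b
    using kk_neg[OF that] by (simp add: mult_nonpos_nonneg)
  have z: "(\<Sum>b<q. Lam $ kk b $ kk b * (c b)^2) = 0"
  proof -
    have "(\<Sum>b<q. Lam $ kk b $ kk b * (c b)^2) \<le> 0" by (rule sum_nonpos) (simp add: terms)
    then show ?thesis using ge le by linarith
  qed
  have "(\<Sum>b<q. - (Lam $ kk b $ kk b * (c b)^2)) = 0" using z by (simp add: sum_negf)
  then have all: "\<forall>b\<in>{..<q}. - (Lam $ kk b $ kk b * (c b)^2) = 0"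
    using sum_nonneg_eq_0_iff[of "{..<q}" "\<lambda>b. - (Lam $ kk b $ kk b * (c b)^2)"] terms by auto
  show "b < q \<Longrightarrow> c b = 0"
  proof -
    assume b: "b < q"
    then have "Lam $ kk b $ kk b * (c b)^2 = 0" using all by auto
    then show "c b = 0" using kk_neg[OF b] by simp
  qed
qed

end


context lin begin

definition idx where "idx = the_inv_into {..<q} kk"

definition Yt :: "real^'n^'n" where
  "Yt = (\<chi> x z. if x \<in> Kset \<and> z \<in> Kset then Ym (idx x) (idx z) else if x = z then 1 else 0)"

lemma idx_kk: "b < q \<Longrightarrow> idx (kk b) = b"
  by (simp add: idx_def the_inv_into_f_f[OF kk_inj])

lemma kk_in: "b < q \<Longrightarrow> kk b \<in> Kset" by (simp add: Kset_def)

lemma Yt_inj: "Yt *v v = 0 \<Longrightarrow> v = 0"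
proof -
  assume h: "Yt *v v = 0"
  have out: "v $ x = 0" if "x \<notin> Kset" for x
  proof -
    have "(Yt *v v) $ x = (\<Sum>z\<in>UNIV. (if x = z then 1 else 0) * v $ z)"
      using that by (simp add: matrix_vector_mult_def Yt_def)
    also have "\<dots> = v $ x" by (simp add: if_distrib[of "\<lambda>t. t * _"] cong: if_cong)
    finally show ?thesis using h by simp
  qed
  have inn: "v $ kk b = 0" if "b < q" for b
  proof (rule Ym_kernel[of "\<lambda>b. v $ kk b"])
    fix a assume a: "a < q"
    have "(Yt *v v) $ kk a = (\<Sum>z\<in>UNIV. Yt $ kk a $ z * v $ z)" by (simp add: matrix_vector_mult_def)
    also have "\<dots> = (\<Sum>b<q. Yt $ kk a $ kk b * v $ kk b)"
      by (rule sum_K) (use a kk_in in \<open>auto simp: Yt_def\<close>)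
    also have "\<dots> = (\<Sum>b<q. Ym a b * v $ kk b)"
      using a by (intro sum.cong refl) (simp add: Yt_def kk_in idx_kk)
    finally show "(\<Sum>b<q. Ym a b * v $ kk b) = 0" using h by simp
  qed (rule that)
  show "v = 0"
  proof (rule iffD2[OF vec_eq_iff], intro allI)
    fix x show "v $ x = 0 $ x"
    proof (cases "x \<in> Kset")
      case True then obtain b where "b < q" "x = kk b" by (auto simp: Kset_def)
      then show ?thesis using inn by simp
    qed (simp add: out)
  qed
qed

definition Binv :: "real^'n^'n" where "Binv = (SOME B. B ** Yt = mat 1)"

definition Xm where "Xm = (\<lambda>a b. if a < q \<and> b < q then Binv $ kk a $ kk b else 0)"

lemma Yt_inv: "Binv ** Yt = mat 1" "Yt ** Binv = mat 1"
proof -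
  have "\<exists>B. B ** Yt = mat 1" using matrix_left_invertible_ker Yt_inj by blast
  then show 1: "Binv ** Yt = mat 1" unfolding Binv_def by (rule someI_ex)
  then show "Yt ** Binv = mat 1" using matrix_left_right_inverse by blast
qed

lemma Xm_right: "a < q \<Longrightarrow> c < q \<Longrightarrow> (\<Sum>b<q. Ym a b * Xm b c) = (if a = c then 1 else 0)"
proof -
  assume a: "a < q" and c: "c < q"
  have "(Yt ** Binv) $ kk a $ kk c = (\<Sum>z\<in>UNIV. Yt $ kk a $ z * Binv $ z $ kk c)"
    by (simp add: matrix_matrix_mult_def)
  also have "\<dots> = (\<Sum>b<q. Yt $ kk a $ kk b * Binv $ kk b $ kk c)"
    by (rule sum_K) (use a kk_in in \<open>auto simp: Yt_def\<close>)
  also have "\<dots> = (\<Sum>b<q. Ym a b * Xm b c)"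
    using a c by (intro sum.cong refl) (simp add: Yt_def kk_in idx_kk Xm_def)
  finally show ?thesis using Yt_inv(2) a c kk_inj
    by (simp add: mat_def inj_on_eq_iff)
qed

lemma Xm_left: "a < q \<Longrightarrow> c < q \<Longrightarrow> (\<Sum>b<q. Xm a b * Ym b c) = (if a = c then 1 else 0)"
proof -
  assume a: "a < q" and c: "c < q"
  have "(Binv ** Yt) $ kk a $ kk c = (\<Sum>z\<in>UNIV. Binv $ kk a $ z * Yt $ z $ kk c)"
    by (simp add: matrix_matrix_mult_def)
  also have "\<dots> = (\<Sum>b<q. Binv $ kk a $ kk b * Yt $ kk b $ kk c)"
    by (rule sum_K) (use c kk_in in \<open>auto simp: Yt_def\<close>)
  also have "\<dots> = (\<Sum>b<q. Xm a b * Ym b c)"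
    using a c by (intro sum.cong refl) (simp add: Yt_def kk_in idx_kk Xm_def)
  finally show ?thesis using Yt_inv(1) a c kk_inj
    by (simp add: mat_def inj_on_eq_iff)
qed

lemma inv_unique:
  assumes "\<forall>a<q. \<forall>b<q. (\<Sum>c<q. Ym a c * B c b) = (if a = b then 1 else 0)
                 \<and> (\<Sum>c<q. B a c * Ym c b) = (if a = b then 1 else 0)"
    and "\<forall>a b. q \<le> a \<or> q \<le> b \<longrightarrow> B a b = 0"
  shows "B = Xm"
proof (intro ext)
  fix a b
  show "B a b = Xm a b"
  proof (cases "a < q \<and> b < q")
    case True
    then have a: "a < q" and b: "b < q" by auto
    have "Xm a b = (\<Sum>c<q. (if a = c then 1 else 0) * Xm c b)"
      using a by (simp add: if_distrib[of "\<lambda>t. t * _"] cong: if_cong)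
    also have "\<dots> = (\<Sum>c<q. (\<Sum>d<q. B a d * Ym d c) * Xm c b)"
      using assms(1) a by (intro sum.cong refl) simp
    also have "\<dots> = (\<Sum>c<q. \<Sum>d<q. B a d * Ym d c * Xm c b)"
      by (simp add: sum_distrib_right)
    also have "\<dots> = (\<Sum>d<q. \<Sum>c<q. B a d * Ym d c * Xm c b)"
      by (rule sum.swap)
    also have "\<dots> = (\<Sum>d<q. B a d * (\<Sum>c<q. Ym d c * Xm c b))"
      by (simp add: sum_distrib_left mult.assoc)
    also have "\<dots> = (\<Sum>d<q. B a d * (if d = b then 1 else 0))"
      using b by (intro sum.cong refl) (simp add: Xm_right)
    also have "\<dots> = B a b" using b by (simp add: if_distrib[of "\<lambda>t. _ * t"] cong: if_cong)
    finally show ?thesis by simp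
  next
    case False then show ?thesis using assms(2) by (auto simp: Xm_def)
  qed
qed

lemma mat_inv_eq: "mat_inv_nat q Ym = Xm"
  unfolding mat_inv_nat_def
proof (rule the_equality)
  show "(\<forall>a<q. \<forall>b<q. (\<Sum>c<q. Ym a c * Xm c b) = (if a = b then 1 else 0) \<and>
                (\<Sum>c<q. Xm a c * Ym c b) = (if a = b then 1 else 0)) \<and>
        (\<forall>a b. q \<le> a \<or> q \<le> b \<longrightarrow> Xm a b = 0)"
  proof (intro conjI allI impI)
    fix a b assume "a < q" "b < q"
    then show "(\<Sum>c<q. Ym a c * Xm c b) = (if a = b then 1 else 0)"
      "(\<Sum>c<q. Xm a c * Ym c b) = (if a = b then 1 else 0)"
      by (simp_all only: Xm_right Xm_left)
  next
    fix a b :: nat assume "q \<le> a \<or> q \<le> b"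
    then show "Xm a b = 0" by (auto simp: Xm_def)
  qed
qed (use inv_unique in blast)

end


context lin begin

definition u where "u i = y i - y 0"
definition mm where "mm i c = l i * (\<Sum>b<q. (u i \<bullet> col (kk b)) * Xm b c)"
definition jj where "jj c = N + 2 - q + c"

lemma Ym_u: "Ym a b = u (jj a) \<bullet> col (kk b)"
  by (simp add: Ym_def u_def jj_def col_def kk_def)

lemma M_eq: "i \<ge> 1 \<Longrightarrow> M_mat N p q l y P ks (i - 1) c = mm i c"
proof -
  assume i: "i \<ge> 1"
  have inv: "mat_inv_nat q (\<lambda>a b. (y (N + 2 - q + a) - y 0) \<bullet> column (ks ! b) P) = Xm"
    using mat_inv_eq unfolding Ym_def .
  show ?thesis unfolding M_mat_def Let_def inv using i
    by (simp add: mm_def u_def col_def kk_def)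
qed

lemma Jn_jj: "Jn = jj ` {..<q}"
proof -
  have "{N+2-q..N+1} = (\<lambda>c. N + 2 - q + c) ` {..<q}"
  proof
    show "(\<lambda>c. N + 2 - q + c) ` {..<q} \<subseteq> {N+2-q..N+1}" using q_le by auto
    show "{N+2-q..N+1} \<subseteq> (\<lambda>c. N + 2 - q + c) ` {..<q}"
    proof
      fix x assume x: "x \<in> {N+2-q..N+1}"
      then have "x = N + 2 - q + (x - (N + 2 - q))" "x - (N + 2 - q) < q" using q_le by auto
      then show "x \<in> (\<lambda>c. N + 2 - q + c) ` {..<q}" by blast
    qed
  qed
  then show ?thesis by (simp add: Jn_eq jj_def)
qed

lemma jj_inj: "inj_on jj {..<q}" by (auto simp: inj_on_def jj_def)

lemma sum_Jn: "(\<Sum>j\<in>Jn. h j) = (\<Sum>c<q. h (jj c))"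
  unfolding Jn_jj by (rule sum.reindex[OF jj_inj, unfolded o_def])

definition Ipos where "Ipos = {i \<in> {0..N + 1}. l i > 0}"
definition Ineg where "Ineg = {i \<in> {0..N + 1}. l i < 0}"

lemma Ineg_ins: "Ineg = insert 0 Jn" using Ineg_eq by (simp add: Ineg_def)

lemma Ipos_ge1: "i \<in> Ipos \<Longrightarrow> 1 \<le> i" using l0 by (cases i) (auto simp: Ipos_def)

lemma mu_J: "i \<in> Ipos \<Longrightarrow> c < q \<Longrightarrow> mu N p q l y P ks i (jj c) = mm i c"
proof -
  assume i: "i \<in> Ipos" and c: "c < q"
  have m: "M_mat N p q l y P ks (i - 1) c = mm i c" by (rule M_eq[OF Ipos_ge1[OF i]])
  have "jj c \<noteq> 0" "jj c - (N + 2 - q) = c" using q_le by (auto simp: jj_def)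
  then show ?thesis unfolding mu_def using m by simp
qed

lemma mu_0: "i \<in> Ipos \<Longrightarrow> mu N p q l y P ks i 0 = l i - (\<Sum>c<q. mm i c)"
proof -
  assume i: "i \<in> Ipos"
  have "(\<Sum>j'\<in>{N + 2 - q..N + 1}. M_mat N p q l y P ks (i - 1) (j' - (N + 2 - q))) =
        (\<Sum>j'\<in>Jn. mm i (j' - (N + 2 - q)))"
    unfolding Jn_eq[symmetric] by (intro sum.cong refl) (rule M_eq[OF Ipos_ge1[OF i]])
  also have "\<dots> = (\<Sum>c<q. mm i c)" by (simp add: sum_Jn jj_def)
  finally show ?thesis by (simp add: mu_def)
qed

lemma zero_Jn: "0 \<notin> Jn" by (simp add: Jn_def)
lemma fin_Jn: "finite Jn" by (simp add: Jn_def)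

lemma sum_Ineg: "(\<Sum>j\<in>Ineg. h j) = h 0 + (\<Sum>c<q. h (jj c))"
  unfolding Ineg_ins by (simp add: zero_Jn fin_Jn sum_Jn)

lemma E1: "i \<in> Ipos \<Longrightarrow> (\<Sum>j\<in>Ineg. mu N p q l y P ks i j) = l i"
  by (simp add: sum_Ineg mu_J mu_0)

lemma E2: assumes i: "i \<in> Ipos" and b': "b' < q"
  shows "(\<Sum>j\<in>Ineg. mu N p q l y P ks i j * (col (kk b') \<bullet> y j)) = l i * (col (kk b') \<bullet> y i)"
proof -
  have yj: "col (kk b') \<bullet> y j = col (kk b') \<bullet> u j + col (kk b') \<bullet> y 0" for j
    by (simp add: u_def inner_diff_right)
  have s1: "(\<Sum>j\<in>Ineg. mu N p q l y P ks i j * (col (kk b') \<bullet> u j)) = (\<Sum>c<q. mm i c * Ym c b')"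
    by (simp add: sum_Ineg mu_J[OF i] u_def Ym_u inner_commute)
  also have "\<dots> = l i * (\<Sum>c<q. \<Sum>b<q. (u i \<bullet> col (kk b)) * Xm b c * Ym c b')"
    by (simp add: mm_def sum_distrib_left sum_distrib_right mult.assoc)
  also have "\<dots> = l i * (\<Sum>b<q. \<Sum>c<q. (u i \<bullet> col (kk b)) * Xm b c * Ym c b')"
    by (subst sum.swap) (rule refl)
  also have "\<dots> = l i * (\<Sum>b<q. (u i \<bullet> col (kk b)) * (\<Sum>c<q. Xm b c * Ym c b'))"
    by (simp add: sum_distrib_left mult.assoc)
  also have "\<dots> = l i * (\<Sum>b<q. (u i \<bullet> col (kk b)) * (if b = b' then 1 else 0))"
    using b' by (simp add: Xm_left)
  also have "\<dots> = l i * (col (kk b') \<bullet> u i)"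
    using b' by (simp add: if_distrib[of "\<lambda>t. _ * t"] inner_commute cong: if_cong)
  finally have s1': "(\<Sum>j\<in>Ineg. mu N p q l y P ks i j * (col (kk b') \<bullet> u j)) = l i * (col (kk b') \<bullet> u i)" .
  have "(\<Sum>j\<in>Ineg. mu N p q l y P ks i j * (col (kk b') \<bullet> y j)) =
     (\<Sum>j\<in>Ineg. mu N p q l y P ks i j * (col (kk b') \<bullet> u j)) + (\<Sum>j\<in>Ineg. mu N p q l y P ks i j) * (col (kk b') \<bullet> y 0)"
  proof -
    have "(\<Sum>j\<in>Ineg. mu N p q l y P ks i j * (col (kk b') \<bullet> y j)) =
       (\<Sum>j\<in>Ineg. mu N p q l y P ks i j * (col (kk b') \<bullet> u j) + mu N p q l y P ks i j * (col (kk b') \<bullet> y 0))"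
      by (intro sum.cong refl) (simp add: u_def inner_diff_right algebra_simps)
    then show ?thesis by (simp add: sum.distrib sum_distrib_right)
  qed
  also have "\<dots> = l i * (col (kk b') \<bullet> y i)"
    using s1' E1[OF i] by (simp add: u_def inner_diff_right algebra_simps)
  finally show ?thesis .
qed

end


context lin begin

lemma Ipos_sub: "Ipos \<subseteq> {1..N+1}" using Ipos_ge1 by (auto simp: Ipos_def)
lemma Jn_sub1: "Jn \<subseteq> {1..N+1}" by (auto simp: Jn_def)
lemma fin_Ipos: "finite Ipos" by (simp add: Ipos_def)
lemma disj_IJ: "Ipos \<inter> Jn = {}" by (auto simp: Ipos_def Jn_def)

lemma split_l: "(\<Sum>k=1..N+1. l k * X k) = (\<Sum>k\<in>Ipos. l k * X k) + (\<Sum>k\<in>Jn. l k * X k)"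
proof -
  have "(\<Sum>k=1..N+1. l k * X k) = (\<Sum>k\<in>Ipos \<union> Jn. l k * X k)"
  proof (rule sum.mono_neutral_right)
    show "Ipos \<union> Jn \<subseteq> {1..N+1}" using Ipos_sub Jn_sub1 by auto
    show "\<forall>i\<in>{1..N + 1} - (Ipos \<union> Jn). l i * X i = 0"
      by (auto simp: Ipos_def Jn_def)
  qed simp
  also have "\<dots> = (\<Sum>k\<in>Ipos. l k * X k) + (\<Sum>k\<in>Jn. l k * X k)"
    by (rule sum.union_disjoint) (auto simp: fin_Ipos fin_Jn disj_IJ)
  finally show ?thesis .
qed

lemma split_l0: "(\<Sum>k=0..N+1. l k * X k) = (\<Sum>k\<in>Ipos. l k * X k) + (\<Sum>k\<in>Ineg. l k * X k)"
proof -
  have "(\<Sum>k=0..N+1. l k * X k) = (\<Sum>k\<in>Ipos \<union> Ineg. l k * X k)"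
  proof (rule sum.mono_neutral_right)
    show "Ipos \<union> Ineg \<subseteq> {0..N+1}" by (auto simp: Ipos_def Ineg_def)
    show "\<forall>i\<in>{0..N + 1} - (Ipos \<union> Ineg). l i * X i = 0"
      by (auto simp: Ipos_def Ineg_def)
  qed simp
  also have "\<dots> = (\<Sum>k\<in>Ipos. l k * X k) + (\<Sum>k\<in>Ineg. l k * X k)"
    by (rule sum.union_disjoint) (auto simp: Ipos_def Ineg_def)
  finally show ?thesis .
qed

lemma colH_J:
  assumes H1: "\<And>b. b < q \<Longrightarrow> (\<Sum>k=1..N+1. l k * ((u k \<bullet> col (kk b)) * h k)) = 0"
    and c: "c < q"
  shows "(\<Sum>i\<in>Ipos. mm i c * h i) = - l (jj c) * h (jj c)"
proof -
  have inner: "(\<Sum>i\<in>Ipos. l i * ((u i \<bullet> col (kk b)) * h i)) = - (\<Sum>c'<q. l (jj c') * (Ym c' b * h (jj c')))"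
    if b: "b < q" for b
    using H1[OF b] unfolding split_l sum_Jn by (simp add: Ym_u add_eq_0_iff)
  have "(\<Sum>i\<in>Ipos. mm i c * h i) = (\<Sum>b<q. Xm b c * (\<Sum>i\<in>Ipos. l i * ((u i \<bullet> col (kk b)) * h i)))"
    by (simp add: mm_def sum_distrib_left sum_distrib_right sum.swap[of _ Ipos "{..<q}"] algebra_simps)
  also have "\<dots> = (\<Sum>b<q. Xm b c * (- (\<Sum>c'<q. l (jj c') * (Ym c' b * h (jj c')))))"
    by (intro sum.cong refl) (simp add: inner)
  also have "\<dots> = - (\<Sum>b<q. \<Sum>c'<q. l (jj c') * h (jj c') * Ym c' b * Xm b c)"
    by (simp add: sum_distrib_left sum_negf algebra_simps)
  also have "\<dots> = - (\<Sum>c'<q. \<Sum>b<q. l (jj c') * h (jj c') * Ym c' b * Xm b c)"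
    by (subst sum.swap) (rule refl)
  also have "\<dots> = - (\<Sum>c'<q. l (jj c') * h (jj c') * (\<Sum>b<q. Ym c' b * Xm b c))"
    by (simp add: sum_distrib_left mult.assoc)
  also have "\<dots> = - (\<Sum>c'<q. l (jj c') * h (jj c') * (if c' = c then 1 else 0))"
    using c by (simp add: Xm_right)
  also have "\<dots> = - l (jj c) * h (jj c)"
    using c by (simp add: if_distrib[of "\<lambda>t. _ * t"] cong: if_cong)
  finally show ?thesis .
qed

lemma colH:
  assumes H1: "\<And>b. b < q \<Longrightarrow> (\<Sum>k=1..N+1. l k * ((u k \<bullet> col (kk b)) * h k)) = 0"
    and H2: "(\<Sum>k=1..N+1. l k * h k) = h 0"
    and j: "j \<in> Ineg"
  shows "(\<Sum>i\<in>Ipos. mu N p q l y P ks i j * h i) = - l j * h j"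
proof (cases "j = 0")
  case False
  then have "j \<in> Jn" using j Ineg_ins by auto
  then obtain c where c: "c < q" "j = jj c" unfolding Jn_jj by auto
  have "(\<Sum>i\<in>Ipos. mu N p q l y P ks i j * h i) = (\<Sum>i\<in>Ipos. mm i c * h i)"
    using c by (intro sum.cong refl) (simp add: mu_J)
  then show ?thesis using colH_J[OF H1 c(1)] c by simp
next
  case True
  have "(\<Sum>i\<in>Ipos. mu N p q l y P ks i 0 * h i) = (\<Sum>i\<in>Ipos. l i * h i) - (\<Sum>c<q. \<Sum>i\<in>Ipos. mm i c * h i)"
    by (simp add: mu_0 left_diff_distrib sum_subtractf sum_distrib_right sum.swap[of _ Ipos "{..<q}"])
  also have "\<dots> = (\<Sum>i\<in>Ipos. l i * h i) + (\<Sum>c<q. l (jj c) * h (jj c))"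
    by (simp add: colH_J[OF H1] sum_negf)
  also have "\<dots> = h 0" using H2 unfolding split_l sum_Jn by simp
  finally show ?thesis using True l0 by simp
qed

lemma sum_lu: "(\<Sum>k=1..N+1. l k *\<^sub>R u k) = 0"
  using bary_pt bary_sum by (simp add: u_def scaleR_diff_right sum_subtractf scaleR_sum_left[symmetric])

lemma E3: "j \<in> Ineg \<Longrightarrow> (\<Sum>i\<in>Ipos. mu N p q l y P ks i j) = - l j"
  using colH[of "\<lambda>_. 1" j]
proof -
  assume j: "j \<in> Ineg"
  have H1: "(\<Sum>k=1..N+1. l k * ((u k \<bullet> col (kk b)) * 1)) = 0" for b
  proof -
    have "(\<Sum>k=1..N+1. l k * ((u k \<bullet> col (kk b)) * 1)) = (\<Sum>k=1..N+1. l k *\<^sub>R u k) \<bullet> col (kk b)"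
      by (simp only: inner_sum_left inner_scaleR_left mult_1_right)
    then show ?thesis using sum_lu by simp
  qed
  show ?thesis using colH[of "\<lambda>_. 1" j] H1 bary_sum j by simp
qed

lemma u_quad: "(\<Sum>k=1..N+1. l k * ((u k \<bullet> a) * (u k \<bullet> b))) = a \<bullet> (G *v b)"
proof -
  have "a \<bullet> (G *v b) = (\<Sum>i = 0..N + 1. l i * ((y i - y 0) \<bullet> a) * ((y i - y 0) \<bullet> b))"
  proof -
    have e: "l i * ((y i - y 0) \<bullet> a) * ((y i - y 0) \<bullet> b) = l i * (y i \<bullet> a) * (y i \<bullet> b)
        - (y 0 \<bullet> b) * (l i * (y i \<bullet> a)) - (y 0 \<bullet> a) * (l i * (y i \<bullet> b)) + (y 0 \<bullet> a) * (y 0 \<bullet> b) * l i" for i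
      by (simp add: inner_diff_left algebra_simps)
    have s: "(\<Sum>i = 0..N + 1. l i * (y i \<bullet> w)) = 0" for w
      using sum_ly0 by (metis (no_types, lifting) inner_scaleR_left inner_sum_left inner_zero_left sum.cong)
    show ?thesis unfolding e G_quad sum.distrib sum_subtractf sum_distrib_left[symmetric] s sum_l0 by simp
  qed
  also have "\<dots> = (\<Sum>k=1..N+1. l k * ((u k \<bullet> a) * (u k \<bullet> b)))"
    by (subst sum.atLeast_Suc_atMost) (auto simp: u_def algebra_simps)
  finally show ?thesis by simp
qed

lemma Lam_entry: "col a \<bullet> (G *v col b) = Lam $ a $ b"
proof -
  have "col a \<bullet> (G *v col b) = (\<Sum>k\<in>UNIV. Lam $ k $ k * (if k = a then 1 else 0) * (if k = b then 1 else 0))"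
    by (simp add: G_eig_quad col_inner)
  also have "\<dots> = (\<Sum>k\<in>UNIV. if k = a then (if a = b then Lam $ a $ a else 0) else 0)"
    by (intro sum.cong refl) auto
  also have "\<dots> = Lam $ a $ b"
    using Lam_diag by simp
  finally show ?thesis .
qed

lemma E4: assumes j: "j \<in> Ineg" and k: "k \<notin> Kset"
  shows "(\<Sum>i\<in>Ipos. mu N p q l y P ks i j * (col k \<bullet> y i)) = - l j * (col k \<bullet> y j)"
proof (rule colH[OF _ _ j])
  fix b assume b: "b < q"
  have "(\<Sum>i=1..N+1. l i * ((u i \<bullet> col (kk b)) * (col k \<bullet> y i))) =
        (\<Sum>i=1..N+1. l i * ((u i \<bullet> col (kk b)) * (u i \<bullet> col k))) + ((\<Sum>i=1..N+1. l i *\<^sub>R u i) \<bullet> col (kk b)) * (col k \<bullet> y 0)"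
  proof -
    have "(\<Sum>i=1..N+1. l i * ((u i \<bullet> col (kk b)) * (col k \<bullet> y i))) =
      (\<Sum>i=1..N+1. l i * ((u i \<bullet> col (kk b)) * (u i \<bullet> col k)) + ((l i *\<^sub>R u i) \<bullet> col (kk b)) * (col k \<bullet> y 0))"
      by (intro sum.cong refl) (simp add: u_def inner_diff_right inner_diff_left inner_commute algebra_simps)
    also have "\<dots> = (\<Sum>i=1..N+1. l i * ((u i \<bullet> col (kk b)) * (u i \<bullet> col k))) + ((\<Sum>i=1..N+1. l i *\<^sub>R u i) \<bullet> col (kk b)) * (col k \<bullet> y 0)"
      by (simp only: sum.distrib inner_sum_left sum_distrib_right)
    finally show ?thesis .
  qed
  also have "\<dots> = Lam $ kk b $ k" unfolding u_quad sum_lu Lam_entry by simp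
  also have "\<dots> = 0" using Lam_diag k kk_in[OF b] by metis
  finally show "(\<Sum>i=1..N+1. l i * ((u i \<bullet> col (kk b)) * (col k \<bullet> y i))) = 0" .
next
  show "(\<Sum>i=1..N+1. l i * (col k \<bullet> y i)) = col k \<bullet> y 0"
    using bary_pt by (metis (no_types, lifting) inner_scaleR_right inner_sum_right sum.cong)
qed

end


context lin begin

definition Bp where "Bp v = (\<Sum>b<q. (col (kk b) \<bullet> v) *\<^sub>R col (kk b))"

lemma Bp_K: "Bp v = (\<Sum>z\<in>Kset. (col z \<bullet> v) *\<^sub>R col z)"
  unfolding Bp_def Kset_def by (subst sum.reindex[OF kk_inj]) simp

lemma fin_K: "finite Kset" by (simp add: Kset_def)

lemma compl: "v - Bp v = (\<Sum>z\<in>-Kset. (col z \<bullet> v) *\<^sub>R col z)"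
proof -
  have "v = (\<Sum>z\<in>Kset \<union> -Kset. (col z \<bullet> v) *\<^sub>R col z)" using expand[of v] by simp
  also have "\<dots> = Bp v + (\<Sum>z\<in>-Kset. (col z \<bullet> v) *\<^sub>R col z)"
    unfolding Bp_K by (rule sum.union_disjoint) (auto simp: fin_K)
  finally show ?thesis by (simp add: algebra_simps)
qed

lemma rB: "i \<in> Ipos \<Longrightarrow> (\<Sum>j\<in>Ineg. mu N p q l y P ks i j *\<^sub>R Bp (y j)) = l i *\<^sub>R Bp (y i)"
proof -
  assume i: "i \<in> Ipos"
  have "(\<Sum>j\<in>Ineg. mu N p q l y P ks i j *\<^sub>R Bp (y j)) =
      (\<Sum>b<q. (\<Sum>j\<in>Ineg. mu N p q l y P ks i j * (col (kk b) \<bullet> y j)) *\<^sub>R col (kk b))"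
    by (simp add: Bp_def scaleR_sum_right scaleR_sum_left sum.swap[of _ Ineg "{..<q}"])
  also have "\<dots> = (\<Sum>b<q. (l i * (col (kk b) \<bullet> y i)) *\<^sub>R col (kk b))"
    by (intro sum.cong refl) (simp add: E2[OF i])
  also have "\<dots> = l i *\<^sub>R Bp (y i)" by (simp add: Bp_def scaleR_sum_right)
  finally show ?thesis .
qed

lemma cQ: "j \<in> Ineg \<Longrightarrow> (\<Sum>i\<in>Ipos. mu N p q l y P ks i j *\<^sub>R (y i - Bp (y i))) = (- l j) *\<^sub>R (y j - Bp (y j))"
proof -
  assume j: "j \<in> Ineg"
  have "(\<Sum>i\<in>Ipos. mu N p q l y P ks i j *\<^sub>R (y i - Bp (y i))) =
      (\<Sum>z\<in>-Kset. (\<Sum>i\<in>Ipos. mu N p q l y P ks i j * (col z \<bullet> y i)) *\<^sub>R col z)"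
    by (simp add: compl scaleR_sum_right scaleR_sum_left sum.swap[of _ Ipos "-Kset"])
  also have "\<dots> = (\<Sum>z\<in>-Kset. (- l j * (col z \<bullet> y j)) *\<^sub>R col z)"
    by (intro sum.cong refl) (simp add: E4[OF j])
  also have "\<dots> = (- l j) *\<^sub>R (y j - Bp (y j))" by (simp add: compl scaleR_sum_right)
  finally show ?thesis .
qed

lemma phi_eq: "norm (v - Bp v)^2 - norm (Bp v)^2 = (\<Sum>z\<in>-Kset. (col z \<bullet> v)^2) - (\<Sum>z\<in>Kset. (col z \<bullet> v)^2)"
  unfolding compl unfolding Bp_K
  by (simp add: norm_sum_col fin_K)

lemma lam_sum: "(\<Sum>k=0..N+1. l k * (col z \<bullet> y k)^2) = Lam $ z $ z"
proof -
  have "(\<Sum>k=0..N+1. l k * (col z \<bullet> y k)^2) = (\<Sum>k=0..N+1. l k * (y k \<bullet> col z) * (y k \<bullet> col z))"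
    by (intro sum.cong refl) (simp add: power2_eq_square inner_commute)
  then show ?thesis using G_quad[of "col z" "col z"] Lam_entry[of z z] by simp
qed

lemma R_bound: "(\<Sum>k=0..N+1. l k * (norm (y k - Bp (y k))^2 - norm (Bp (y k))^2)) \<le> (\<Sum>z\<in>UNIV. \<bar>Lam $ z $ z\<bar>)"
proof -
  have "(\<Sum>k=0..N+1. l k * (norm (y k - Bp (y k))^2 - norm (Bp (y k))^2)) =
      (\<Sum>z\<in>-Kset. \<Sum>k=0..N+1. l k * (col z \<bullet> y k)^2) - (\<Sum>z\<in>Kset. \<Sum>k=0..N+1. l k * (col z \<bullet> y k)^2)"
  proof -
    have "(\<Sum>k=0..N+1. l k * (norm (y k - Bp (y k))^2 - norm (Bp (y k))^2)) =
      (\<Sum>k=0..N+1. \<Sum>z\<in>-Kset. l k * (col z \<bullet> y k)^2) - (\<Sum>k=0..N+1. \<Sum>z\<in>Kset. l k * (col z \<bullet> y k)^2)"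
      by (simp only: phi_eq right_diff_distrib sum_subtractf sum_distrib_left)
    also have "\<dots> = (\<Sum>z\<in>-Kset. \<Sum>k=0..N+1. l k * (col z \<bullet> y k)^2) - (\<Sum>z\<in>Kset. \<Sum>k=0..N+1. l k * (col z \<bullet> y k)^2)"
      by (simp only: sum.swap[of _ "{0..N+1}"])
    finally show ?thesis .
  qed
  also have "\<dots> = (\<Sum>z\<in>-Kset. Lam $ z $ z) - (\<Sum>z\<in>Kset. Lam $ z $ z)" by (simp only: lam_sum)
  also have "\<dots> \<le> (\<Sum>z\<in>-Kset. \<bar>Lam $ z $ z\<bar>) + (\<Sum>z\<in>Kset. \<bar>Lam $ z $ z\<bar>)"
  proof -
    have "(\<Sum>z\<in>-Kset. Lam $ z $ z) \<le> (\<Sum>z\<in>-Kset. \<bar>Lam $ z $ z\<bar>)" by (intro sum_mono) simp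
    moreover have "- (\<Sum>z\<in>Kset. Lam $ z $ z) \<le> (\<Sum>z\<in>Kset. \<bar>Lam $ z $ z\<bar>)"
      by (simp add: sum_negf[symmetric]) (intro sum_mono, simp)
    ultimately show ?thesis by linarith
  qed
  also have "\<dots> = (\<Sum>z\<in>UNIV. \<bar>Lam $ z $ z\<bar>)"
    using sum.union_disjoint[of "-Kset" Kset "\<lambda>z. \<bar>Lam $ z $ z\<bar>"] fin_K by (simp add: Un_commute)
  finally show ?thesis .
qed

lemma main_bound:
  fixes f :: "real^'n \<Rightarrow> real" and g :: "real^'n \<Rightarrow> real^'n"
  assumes der: "\<forall>x. (f has_derivative (\<lambda>h. g x \<bullet> h)) (at x)"
    and lip: "\<forall>u v. norm (g u - g v) \<le> L * norm (u - v)"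
    and mu_nonneg: "\<forall>i\<in>{i \<in> {0..N + 1}. l i > 0}. \<forall>j\<in>{j \<in> {0..N + 1}. l j < 0}.
                      mu N p q l y P ks i j \<ge> 0"
  shows "(\<Sum>k=0..N+1. l k * f (y k)) \<le> L/2 * (\<Sum>z\<in>UNIV. \<bar>Lam $ z $ z\<bar>)"
proof -
  have c: "(\<Sum>i\<in>Ipos. l i * f (y i)) - (\<Sum>j\<in>Ineg. (- l j) * f (y j)) \<le>
     L/2 * ((\<Sum>i\<in>Ipos. l i * (norm (y i - Bp (y i))^2 - norm (Bp (y i))^2))
          - (\<Sum>j\<in>Ineg. (- l j) * (norm (y j - Bp (y j))^2 - norm (Bp (y j))^2)))"
  proof (rule core[OF der lip])
    show "finite Ipos" "finite Ineg" by (auto simp: Ipos_def Ineg_def)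
    show "\<And>i j. i \<in> Ipos \<Longrightarrow> j \<in> Ineg \<Longrightarrow> 0 \<le> mu N p q l y P ks i j"
      using mu_nonneg by (auto simp: Ipos_def Ineg_def)
    show "\<And>i. i \<in> Ipos \<Longrightarrow> (\<Sum>j\<in>Ineg. mu N p q l y P ks i j) = l i" by (rule E1)
    show "\<And>i. i \<in> Ipos \<Longrightarrow> (\<Sum>j\<in>Ineg. mu N p q l y P ks i j *\<^sub>R Bp (y j)) = l i *\<^sub>R Bp (y i)" by (rule rB)
    show "\<And>j. j \<in> Ineg \<Longrightarrow> (\<Sum>i\<in>Ipos. mu N p q l y P ks i j) = - l j" by (rule E3)
    show "\<And>j. j \<in> Ineg \<Longrightarrow> (\<Sum>i\<in>Ipos. mu N p q l y P ks i j *\<^sub>R (y i - Bp (y i))) = (- l j) *\<^sub>R (y j - Bp (y j))"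
      by (rule cQ)
  qed
  have L1: "(\<Sum>k=0..N+1. l k * f (y k)) = (\<Sum>i\<in>Ipos. l i * f (y i)) - (\<Sum>j\<in>Ineg. (- l j) * f (y j))"
    using split_l0[where X="\<lambda>k. f (y k)"] by (simp add: sum_negf)
  have L2: "(\<Sum>k=0..N+1. l k * (norm (y k - Bp (y k))^2 - norm (Bp (y k))^2)) =
     (\<Sum>i\<in>Ipos. l i * (norm (y i - Bp (y i))^2 - norm (Bp (y i))^2))
          - (\<Sum>j\<in>Ineg. (- l j) * (norm (y j - Bp (y j))^2 - norm (Bp (y j))^2))"
    using split_l0[where X="\<lambda>k. norm (y k - Bp (y k))^2 - norm (Bp (y k))^2"] by (simp add: sum_negf)
  have Lnn: "L \<ge> 0"
  proof -
    have "norm (g 1 - g 0) \<le> L * norm (1 - 0 :: real^'n)" using lip by blast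
    moreover have "norm (1 :: real^'n) > 0" by simp
    ultimately show ?thesis by (smt (verit) mult_neg_pos norm_ge_zero diff_zero)
  qed
  show ?thesis using c L1 L2 R_bound mult_left_mono[OF R_bound, of "L/2"] Lnn by simp
qed

lemma frob: "frob_inner G (L *\<^sub>R (P ** mat_sign Lam ** transpose P)) = L * (\<Sum>z\<in>UNIV. \<bar>Lam $ z $ z\<bar>)"
proof -
  have sd: "\<forall>a b. a \<noteq> b \<longrightarrow> mat_sign Lam $ a $ b = 0" using Lam_diag by (simp add: mat_sign_def)
  have q: "col k \<bullet> (G *v col k) = (\<Sum>a\<in>UNIV. \<Sum>b\<in>UNIV. G $ a $ b * (P $ a $ k * P $ b $ k))" for k
    by (simp add: inner_vec_def matrix_vector_mult_def col_def column_def sum_distrib_left algebra_simps)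
  have "frob_inner G (L *\<^sub>R (P ** mat_sign Lam ** transpose P)) =
     L * (\<Sum>a\<in>UNIV. \<Sum>b\<in>UNIV. \<Sum>k\<in>UNIV. G $ a $ b * (P $ a $ k * sgn (Lam $ k $ k) * P $ b $ k))"
  proof -
    have ms: "mat_sign Lam $ k $ k = sgn (Lam $ k $ k)" for k by (simp add: mat_sign_def)
    have "frob_inner G (L *\<^sub>R (P ** mat_sign Lam ** transpose P)) =
      L * (\<Sum>a\<in>UNIV. \<Sum>b\<in>UNIV. G $ a $ b * (P ** mat_sign Lam ** transpose P) $ a $ b)"
      by (simp add: frob_inner_def sum_distrib_left algebra_simps)
    also have "\<dots> = L * (\<Sum>a\<in>UNIV. \<Sum>b\<in>UNIV. \<Sum>k\<in>UNIV. G $ a $ b * (P $ a $ k * sgn (Lam $ k $ k) * P $ b $ k))"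
      by (simp only: diag_prod_entry[OF sd] ms sum_distrib_left)
    finally show ?thesis .
  qed
  also have "\<dots> = L * (\<Sum>k\<in>UNIV. \<Sum>a\<in>UNIV. \<Sum>b\<in>UNIV. G $ a $ b * (P $ a $ k * sgn (Lam $ k $ k) * P $ b $ k))"
    by (subst swap3) (rule refl)
  also have "\<dots> = L * (\<Sum>k\<in>UNIV. sgn (Lam $ k $ k) * (col k \<bullet> (G *v col k)))"
    by (simp add: q sum_distrib_left algebra_simps)
  also have "\<dots> = L * (\<Sum>z\<in>UNIV. \<bar>Lam $ z $ z\<bar>)"
  proof -
    have "sgn x * x = \<bar>x\<bar>" for x :: real by (cases rule: linorder_cases[of x 0]) auto
    then show ?thesis by (simp add: Lam_entry)
  qed
  finally show ?thesis .
qed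

end

theorem theorem4p5:
  fixes f :: "real^'n \<Rightarrow> real" and L :: real
    and y :: "nat \<Rightarrow> real^'n" and m :: "real^'n \<Rightarrow> real"
    and l :: "nat \<Rightarrow> real" and P Lam :: "real^'n^'n" and ks :: "'n list"
    and N p q :: nat
  defines "N \<equiv> CARD('n)"
  defines "p \<equiv> card {i \<in> {0..N + 1}. l i > 0}"
  defines "q \<equiv> card {i \<in> {0..N + 1}. l i < 0} - 1"
  assumes Lpos: "L > 0"
    and fC11: "C11 L f"
    and inj: "inj_on y {1..N + 1}"
    and aff_indep: "\<not> affine_dependent (y ` {1..N + 1})"
    and m_affine: "\<exists>a b. \<forall>x. m x = a \<bullet> x + b"
    and m_interp: "\<forall>i\<in>{1..N + 1}. m (y i) = f (y i)"
    and bary_sum: "(\<Sum>i = 1..N + 1. l i) = 1"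
    and bary_pt: "(\<Sum>i = 1..N + 1. l i *\<^sub>R y i) = y 0"
    and l0: "l 0 = -1"
    and ordered: "\<forall>i j. 1 \<le> i \<and> i \<le> j \<and> j \<le> N + 1 \<longrightarrow> l j \<le> l i"
    and P_orth: "orthogonal_matrix P"
    and Lam_diag: "\<forall>a b. a \<noteq> b \<longrightarrow> Lam $ a $ b = 0"
    and G_eig: "(\<Sum>i = 0..N + 1. l i *\<^sub>R outer (y i) (y i)) = P ** Lam ** transpose P"
    and ks_distinct: "distinct ks"
    and ks_set: "set ks = {k. Lam $ k $ k < 0}"
    and mu_nonneg: "\<forall>i\<in>{i \<in> {0..N + 1}. l i > 0}. \<forall>j\<in>{j \<in> {0..N + 1}. l j < 0}.
                      mu N p q l y P ks i j \<ge> 0"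
  shows "\<bar>m (y 0) - f (y 0)\<bar> \<le> 1/2 * frob_inner (\<Sum>i = 0..N + 1. l i *\<^sub>R outer (y i) (y i))
                                     (L *\<^sub>R (P ** mat_sign Lam ** transpose P))"
proof -
  interpret lin y l P Lam ks N q
    by (unfold_locales) (use N_def q_def inj aff_indep bary_sum bary_pt l0 ordered P_orth Lam_diag
        G_eig ks_distinct ks_set in auto)
  obtain g :: "real^'n \<Rightarrow> real^'n" where
    der: "\<forall>x. (f has_derivative (\<lambda>h. g x \<bullet> h)) (at x)" and
    lip: "\<forall>u1 u2. norm (g u1 - g u2) \<le> L * norm (u1 - u2)"
    using fC11 unfolding C11_def by blast
  have der2: "\<forall>x. ((\<lambda>x. - f x) has_derivative (\<lambda>h. (- g x) \<bullet> h)) (at x)"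
  proof
    fix x show "((\<lambda>x. - f x) has_derivative (\<lambda>h. (- g x) \<bullet> h)) (at x)"
      using has_derivative_minus[OF der[rule_format, of x]] by simp
  qed
  have lip2: "\<forall>u1 u2. norm ((- g u1) - (- g u2)) \<le> L * norm (u1 - u2)"
  proof (intro allI)
    fix u1 u2
    have "(- g u1) - (- g u2) = - (g u1 - g u2)" by simp
    then have "norm ((- g u1) - (- g u2)) = norm (g u1 - g u2)" by (simp only: norm_minus_cancel)
    then show "norm ((- g u1) - (- g u2)) \<le> L * norm (u1 - u2)" using lip by simp
  qed
  have b1: "(\<Sum>k=0..N+1. l k * f (y k)) \<le> L/2 * (\<Sum>z\<in>UNIV. \<bar>Lam $ z $ z\<bar>)"
    by (rule main_bound[OF der lip mu_nonneg])
  have b2: "(\<Sum>k=0..N+1. l k * (- f (y k))) \<le> L/2 * (\<Sum>z\<in>UNIV. \<bar>Lam $ z $ z\<bar>)"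
    using main_bound[OF der2 lip2 mu_nonneg] by simp
  obtain a b where ab: "\<forall>x. m x = a \<bullet> x + b" using m_affine by blast
  have my0: "m (y 0) = (\<Sum>k=1..N+1. l k * f (y k))"
  proof -
    have "(\<Sum>k=1..N+1. l k * f (y k)) = (\<Sum>k=1..N+1. l k * (a \<bullet> y k + b))"
      using m_interp ab by (intro sum.cong refl) simp
    also have "\<dots> = a \<bullet> (\<Sum>k=1..N+1. l k *\<^sub>R y k) + b * (\<Sum>k=1..N+1. l k)"
      by (simp add: inner_sum_right sum.distrib distrib_left sum_distrib_left algebra_simps)
    also have "\<dots> = m (y 0)" using bary_pt bary_sum ab by simp
    finally show ?thesis by simp
  qed
  have e: "m (y 0) - f (y 0) = (\<Sum>k=0..N+1. l k * f (y k))"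
    using my0 l0 by (subst sum.atLeast_Suc_atMost) auto
  have fr: "frob_inner (\<Sum>i = 0..N + 1. l i *\<^sub>R outer (y i) (y i)) (L *\<^sub>R (P ** mat_sign Lam ** transpose P))
     = L * (\<Sum>z\<in>UNIV. \<bar>Lam $ z $ z\<bar>)"
    using frob by (simp add: G_def)
  have "(\<Sum>k=0..N+1. l k * (- f (y k))) = - (\<Sum>k=0..N+1. l k * f (y k))" by (simp add: sum_negf)
  then show ?thesis unfolding e fr using b1 b2 by linarith
qed

end
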